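(* Let $A$ be a nontrivial closed class of decision tables from $\mathcal M_2^\infty$ and $\psi$ a bounded complexity measure. If $\mathcal H^\infty_{\psi,A}$ is everywhere defined, then for every $n\in\omega$ the value $G_{\psi,A}(n)$ is defined and $\mathcal H^\infty_{\psi,A}(n)\ge G_{\psi,A}(n)-1$.
   Context: Notation: $\omega=\{0,1,2,\dots\}$; $\mathcal P(\omega)$ is the set of nonempty finite subsets of $\omega$; $E_2=\{0,1\}$. $P=\{f_i:i\in\omega\}$ is a set of attributes, $f_i\neq f_j$ for $i\ne j$. Decision tables: $\mathcal M_2^\infty$ is the set of rectangular tables filled with numbers from $E_2$, whose columns are labeled with pairwise different attributes from $P$, whose rows are pairwise different, and each row of which is labeled with a set from $\mathcal P(\omega)$ (its set of decisions). The empty table (no rows) is denoted $\Lambda$ and belongs to $\mathcal M_2^\infty$. For $T\in\mathcal M_2^\infty$: $\Pi(T)$ is the intersection of the decision sets of all rows (common decisions); $\mathrm{At}(T)$ is the set of attributes labeling columns. For nonempty $T$, $\Omega_2(T)$ is the set of finite words (including the empty word $\lambda$) over the alphabet $\{(f_i,\delta):f_i\in\mathrm{At}(T),\delta\in E_2\}$; for $\alpha=(f_{i_1},\delta_1)\cdots(f_{i_m},\delta_m)$, $T\alpha$ is the subtable of $T$ consisting of the rows having value $\delta_j$ in the column $f_{i_j}$ for all $j$, and $T\lambda=T$. Operations: for $D\subseteq\mathrm{At}(T)$, $I(D,T)$ is obtained from $T$ by deleting the columns labeled with attributes from $D$ and, in each group of rows coinciding on the remaining columns, keeping only the first row; $I(\mathrm{At}(T),T)=\Lambda$.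 For $\nu:E_2^{|\mathrm{At}(T)|}\to\mathcal P(\omega)$, $J(\nu,T)$ is obtained by replacing the decision set of each row $\bar\delta$ by $\nu(\bar\delta)$. $[T]=\{J(\nu,I(D,T)):D\subseteq\mathrm{At}(T),\ \nu:E_2^{|\mathrm{At}(T)\setminus D|}\to\mathcal P(\omega)\}$; for nonempty $A\subseteq\mathcal M_2^\infty$, $[A]=\bigcup_{T\in A}[T]$. $A$ is a closed class if $[A]=A$; nontrivial if it contains a nonempty table. Decision trees: a $2$-decision tree is a finite directed rooted tree with at least two nodes in which the root and the edges leaving the root are unlabeled, each terminal node is labeled with a decision from $\omega$, and each other node is labeled with an attribute from $P$, each edge leaving such a node being labeled with a number from $E_2$. $\mathrm{At}(\Gamma)$ is the set of attributes labeling nodes of $\Gamma$. For a complete path $\tau=v_1,d_1,\dots,v_m,d_m,v_{m+1}$ (from the root to a terminal node), $\pi(\tau)=\lambda$ if $m=1$, and otherwise $\pi(\tau)=(f_{i_2},\delta_2)\cdots(f_{i_m},\delta_m)$ where $v_j$ is labeled $f_{i_j}$ and $d_j$ is labeled $\delta_j$; $T(\tau)=T\pi(\tau)$. For $T\ne\Lambda$, a nondeterministic decision tree for $T$ is a $2$-decision tree $\Gamma$ with $\mathrm{At}(\Gamma)\subseteq\mathrm{At}(T)$ such that every row of $T$ belongs to $T(\tau)$ for some complete path $\tau$, and for every complete path $\tau$ either $T(\tau)=\Lambda$ or the decision at the terminal node of $\tau$ belongs to $\Pi(T(\tau))$. A deterministic decision tree for $T$ is a nondeterministic decision tree for $T$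 in which, additionally, exactly one edge leaves the root and the edges leaving any node that is neither the root nor terminal are labeled with pairwise different numbers. Complexity measures: a partially bounded complexity measure is a function $\psi:P^*\to\omega$ on finite words over $P$ such that for all words $\alpha_1,\alpha_2$: $\psi(\alpha_1)=0$ iff $\alpha_1=\lambda$; $\psi(\alpha_1)$ is invariant under permutation of letters; $\psi(\alpha_1)\le\psi(\alpha_1\alpha_2)$; $\psi(\alpha_1\alpha_2)\le\psi(\alpha_1)+\psi(\alpha_2)$. It is bounded if in addition $\psi(\alpha)\ge|\alpha|$ for all $\alpha$. $\psi$ is extended to words $(f_{i_1},\delta_1)\cdots(f_{i_m},\delta_m)$ by $\psi(f_{i_1}\cdots f_{i_m})$ ($\psi(\lambda)=0$). For a $2$-decision tree $\Gamma$, $\psi(\Gamma)=\max_\tau\psi(\pi(\tau))$ over complete paths. For $T\ne\Lambda$, $\psi^d(T)$ (resp. $\psi^a(T)$) is the minimum of $\psi(\Gamma)$ over deterministic (resp. nondeterministic) decision trees $\Gamma$ for $T$; $\psi^d(\Lambda)=\psi^a(\Lambda)=0$. Parameters: $m_\psi(T)=\max\{\psi(f_i):f_i\in\mathrm{At}(T)\}$, $m_\psi(\Lambda)=0$. A word $\alpha\in\Omega_2(T)$ is annihilating for $T$ if $T\alpha=\Lambda$ and $\alpha$ contains no two letters $(f_i,\delta),(f_i,\sigma)$ with $\delta\ne\sigma$; it is irreducible if no word obtained from $\alpha$ by deleting some (at least one) letters is annihilating for $T$; $G(T)$ is the maximum length of an irreducible annihilating word for $T$ if one exists, and $0$ otherwise;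 $G(\Lambda)=0$. For $n\in\omega$: $A_\psi(n)=\{T\in A:m_\psi(T)\le n\}$; $G_{\psi,A}(n)$ is undefined if $\{G(T):T\in A_\psi(n)\}$ is infinite, else its maximum; $\mathcal H^\infty_{\psi,A}(n)$ is undefined if $\{\psi^d(T):T\in A,\psi^a(T)\le n\}$ is infinite, else its maximum. *)

theory Defs
  imports Main "HOL-Library.Sublist" "HOL-Library.Multiset"
begin

text \<open>Attribute f_i is represented by its index i :: nat; E_2 = {0,1} is represented
  by bool (False = 0, True = 1). A table is a pair (column labels, rows), each row being
  a pair (tuple of values, set of decisions).\<close>

type_synonym table = "nat list \<times> (bool list \<times> nat set) list"

definition cols :: "table \<Rightarrow> nat list" where "cols T = fst T"
definition rows :: "table \<Rightarrow> (bool list \<times> nat set) list" where "rows T = snd T"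

definition At :: "table \<Rightarrow> nat set" where "At T = set (cols T)"

definition Lambda :: table where "Lambda = ([], [])"

definition Pfin :: "nat set set" where "Pfin = {S. finite S \<and> S \<noteq> {}}"

definition in_M2 :: "table \<Rightarrow> bool" where
  "in_M2 T \<longleftrightarrow> distinct (cols T) \<and> distinct (map fst (rows T))
     \<and> (\<forall>rd\<in>set (rows T). length (fst rd) = length (cols T) \<and> snd rd \<in> Pfin)
     \<and> (rows T = [] \<longleftrightarrow> cols T = [])"

definition Pi_tab :: "table \<Rightarrow> nat set" where
  "Pi_tab T = (\<Inter>rd\<in>set (rows T). snd rd)"

definition val :: "table \<Rightarrow> bool list \<Rightarrow> nat \<Rightarrow> bool" where
  "val T r f = the (map_of (zip (cols T) r) f)"

definition subtab :: "table \<Rightarrow> (nat \<times> bool) list \<Rightarrow> table" where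
  "subtab T \<alpha> = (let rs = filter (\<lambda>rd. \<forall>fd\<in>set \<alpha>. val T (fst rd) (fst fd) = snd fd) (rows T)
                 in if rs = [] then Lambda else (cols T, rs))"

definition in_Omega2 :: "table \<Rightarrow> (nat \<times> bool) list \<Rightarrow> bool" where
  "in_Omega2 T \<alpha> \<longleftrightarrow> (\<forall>fd\<in>set \<alpha>. fst fd \<in> At T)"

definition dedup_first :: "('a \<times> 'b) list \<Rightarrow> ('a \<times> 'b) list" where
  "dedup_first xs = [xs ! i. i \<leftarrow> [0..<length xs], \<forall>j<i. fst (xs ! j) \<noteq> fst (xs ! i)]"

definition I_op :: "nat set \<Rightarrow> table \<Rightarrow> table" where
  "I_op D T = (if At T \<subseteq> D then Lambda else
     (filter (\<lambda>f. f \<notin> D) (cols T),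
      dedup_first (map (\<lambda>rd. (map fst (filter (\<lambda>p. snd p \<notin> D) (zip (fst rd) (cols T))), snd rd))
                       (rows T))))"

definition J_op :: "(bool list \<Rightarrow> nat set) \<Rightarrow> table \<Rightarrow> table" where
  "J_op \<nu> T = (cols T, map (\<lambda>rd. (fst rd, \<nu> (fst rd))) (rows T))"

definition closure1 :: "table \<Rightarrow> table set" where
  "closure1 T = {J_op \<nu> (I_op D T) | D \<nu>. D \<subseteq> At T \<and>
      (\<forall>v. length v = card (At T - D) \<longrightarrow> \<nu> v \<in> Pfin)}"

definition closure :: "table set \<Rightarrow> table set" where
  "closure A = (\<Union>T\<in>A. closure1 T)"

definition closed_class :: "table set \<Rightarrow> bool" where
  "closed_class A \<longleftrightarrow> A \<noteq> {} \<and> A \<subseteq> {T. in_M2 T} \<and> closure A = A"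

definition nontrivial :: "table set \<Rightarrow> bool" where
  "nontrivial A \<longleftrightarrow> (\<exists>T\<in>A. T \<noteq> Lambda)"

text \<open>A 2-decision tree is given by the (nonempty) list of subtrees hanging from the
  unlabelled root via unlabelled edges.\<close>
datatype dtree = Leaf nat | Node nat "(bool \<times> dtree) list"

inductive wf_node :: "dtree \<Rightarrow> bool" where
  "wf_node (Leaf d)"
| "es \<noteq> [] \<Longrightarrow> (\<forall>p\<in>set es. wf_node (snd p)) \<Longrightarrow> wf_node (Node f es)"

inductive det_node :: "dtree \<Rightarrow> bool" where
  "det_node (Leaf d)"
| "distinct (map fst es) \<Longrightarrow> (\<forall>p\<in>set es. det_node (snd p)) \<Longrightarrow> det_node (Node f es)"

inductive occurs :: "nat \<Rightarrow> dtree \<Rightarrow> bool" where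
  "occurs f (Node f es)"
| "p \<in> set es \<Longrightarrow> occurs f (snd p) \<Longrightarrow> occurs f (Node g es)"

inductive path :: "dtree \<Rightarrow> (nat \<times> bool) list \<Rightarrow> nat \<Rightarrow> bool" where
  "path (Leaf d) [] d"
| "(\<delta>, c) \<in> set es \<Longrightarrow> path c w d \<Longrightarrow> path (Node f es) ((f, \<delta>) # w) d"

type_synonym dtree2 = "dtree list"

definition is_2tree :: "dtree2 \<Rightarrow> bool" where
  "is_2tree \<Gamma> \<longleftrightarrow> \<Gamma> \<noteq> [] \<and> (\<forall>c\<in>set \<Gamma>. wf_node c)"

definition tree_At :: "dtree2 \<Rightarrow> nat set" where
  "tree_At \<Gamma> = {f. \<exists>c\<in>set \<Gamma>. occurs f c}"

definition cpath :: "dtree2 \<Rightarrow> (nat \<times> bool) list \<Rightarrow> nat \<Rightarrow> bool" where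
  "cpath \<Gamma> w d \<longleftrightarrow> (\<exists>c\<in>set \<Gamma>. path c w d)"

definition nondet_tree_for :: "table \<Rightarrow> dtree2 \<Rightarrow> bool" where
  "nondet_tree_for T \<Gamma> \<longleftrightarrow> is_2tree \<Gamma> \<and> tree_At \<Gamma> \<subseteq> At T
     \<and> (\<forall>rd\<in>set (rows T). \<exists>w d. cpath \<Gamma> w d \<and> rd \<in> set (rows (subtab T w)))
     \<and> (\<forall>w d. cpath \<Gamma> w d \<longrightarrow> subtab T w = Lambda \<or> d \<in> Pi_tab (subtab T w))"

definition det_tree_for :: "table \<Rightarrow> dtree2 \<Rightarrow> bool" where
  "det_tree_for T \<Gamma> \<longleftrightarrow> nondet_tree_for T \<Gamma> \<and> length \<Gamma> = 1 \<and> (\<forall>c\<in>set \<Gamma>. det_node c)"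

definition partially_bounded_cm :: "(nat list \<Rightarrow> nat) \<Rightarrow> bool" where
  "partially_bounded_cm \<psi> \<longleftrightarrow>
     (\<forall>a. \<psi> a = 0 \<longleftrightarrow> a = [])
   \<and> (\<forall>a b. mset a = mset b \<longrightarrow> \<psi> a = \<psi> b)
   \<and> (\<forall>a b. \<psi> a \<le> \<psi> (a @ b))
   \<and> (\<forall>a b. \<psi> (a @ b) \<le> \<psi> a + \<psi> b)"

definition bounded_cm :: "(nat list \<Rightarrow> nat) \<Rightarrow> bool" where
  "bounded_cm \<psi> \<longleftrightarrow> partially_bounded_cm \<psi> \<and> (\<forall>a. length a \<le> \<psi> a)"

definition psi_word :: "(nat list \<Rightarrow> nat) \<Rightarrow> (nat \<times> bool) list \<Rightarrow> nat" where
  "psi_word \<psi> w = \<psi> (map fst w)"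

definition psi_tree :: "(nat list \<Rightarrow> nat) \<Rightarrow> dtree2 \<Rightarrow> nat" where
  "psi_tree \<psi> \<Gamma> = Max {psi_word \<psi> w | w d. cpath \<Gamma> w d}"

definition psi_d :: "(nat list \<Rightarrow> nat) \<Rightarrow> table \<Rightarrow> nat" where
  "psi_d \<psi> T = (if T = Lambda then 0 else
     (LEAST k. \<exists>\<Gamma>. det_tree_for T \<Gamma> \<and> psi_tree \<psi> \<Gamma> = k))"

definition psi_a :: "(nat list \<Rightarrow> nat) \<Rightarrow> table \<Rightarrow> nat" where
  "psi_a \<psi> T = (if T = Lambda then 0 else
     (LEAST k. \<exists>\<Gamma>. nondet_tree_for T \<Gamma> \<and> psi_tree \<psi> \<Gamma> = k))"

definition m_psi :: "(nat list \<Rightarrow> nat) \<Rightarrow> table \<Rightarrow> nat" where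
  "m_psi \<psi> T = (if At T = {} then 0 else Max {\<psi> [f] | f. f \<in> At T})"

definition annihilating :: "table \<Rightarrow> (nat \<times> bool) list \<Rightarrow> bool" where
  "annihilating T \<alpha> \<longleftrightarrow> in_Omega2 T \<alpha> \<and> subtab T \<alpha> = Lambda
     \<and> (\<forall>f \<delta> \<sigma>. (f, \<delta>) \<in> set \<alpha> \<and> (f, \<sigma>) \<in> set \<alpha> \<longrightarrow> \<delta> = \<sigma>)"

definition irreducible_ann :: "table \<Rightarrow> (nat \<times> bool) list \<Rightarrow> bool" where
  "irreducible_ann T \<alpha> \<longleftrightarrow> annihilating T \<alpha>
     \<and> (\<forall>\<beta>. subseq \<beta> \<alpha> \<and> \<beta> \<noteq> \<alpha> \<longrightarrow> \<not> annihilating T \<beta>)"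

definition G_tab :: "table \<Rightarrow> nat" where
  "G_tab T = (if T = Lambda \<or> \<not> (\<exists>\<alpha>. irreducible_ann T \<alpha>) then 0
              else Max {length \<alpha> | \<alpha>. irreducible_ann T \<alpha>})"

text \<open>Partial functions G_{psi,A} and H^infinity_{psi,A}: None = undefined.\<close>
definition G_class :: "(nat list \<Rightarrow> nat) \<Rightarrow> table set \<Rightarrow> nat \<Rightarrow> nat option" where
  "G_class \<psi> A n = (let S = {G_tab T | T. T \<in> A \<and> m_psi \<psi> T \<le> n}
                     in if finite S then Some (Max S) else None)"

definition H_class :: "(nat list \<Rightarrow> nat) \<Rightarrow> table set \<Rightarrow> nat \<Rightarrow> nat option" where
  "H_class \<psi> A n = (let S = {psi_d \<psi> T | T. T \<in> A \<and> psi_a \<psi> T \<le> n}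
                     in if finite S then Some (Max S) else None)"

end

theory Submission
  imports Defs
begin


lemma subseq_remove1: "subseq (remove1 x xs) xs"
  by (induction xs) auto

lemma subseq_del: "subseq (xs @ ys) (xs @ y # ys)"
  by (simp add: list_emb_append_mono subseq_Cons')

definition cons :: "table \<Rightarrow> (bool list \<times> nat set) \<Rightarrow> (nat \<times> bool) list \<Rightarrow> bool" where
  "cons T r w \<longleftrightarrow> (\<forall>fd\<in>set w. val T (fst r) (fst fd) = snd fd)"

lemma subtab_rows: "set (rows (subtab T w)) = {r \<in> set (rows T). cons T r w}"
  unfolding subtab_def cons_def Let_def Lambda_def rows_def
  by (auto simp: filter_empty_conv)

lemma subtab_Lambda: "subtab T w = Lambda \<longleftrightarrow> rows (subtab T w) = []"
  unfolding subtab_def Let_def Lambda_def rows_def by auto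

lemma subtab_Lambda2: "subtab T w = Lambda \<longleftrightarrow> (\<forall>r\<in>set (rows T). \<not> cons T r w)"
proof -
  have "rows (subtab T w) = [] \<longleftrightarrow> set (rows (subtab T w)) = {}" by simp
  thus ?thesis using subtab_Lambda[of T w] subtab_rows[of T w] by auto
qed

lemma Pi_subtab: "r \<in> set (rows T) \<Longrightarrow> cons T r w \<Longrightarrow> d \<in> Pi_tab (subtab T w) \<Longrightarrow> d \<in> snd r"
proof -
  assume "r \<in> set (rows T)" "cons T r w" "d \<in> Pi_tab (subtab T w)"
  hence "r \<in> set (rows (subtab T w))" using subtab_rows[of T w] by auto
  thus ?thesis using \<open>d \<in> Pi_tab (subtab T w)\<close> unfolding Pi_tab_def by blast
qed

lemma Pi_subtabI: "(\<And>r. r \<in> set (rows T) \<Longrightarrow> cons T r w \<Longrightarrow> d \<in> snd r) \<Longrightarrow> d \<in> Pi_tab (subtab T w)"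
  unfolding Pi_tab_def using subtab_rows[of T w] by auto

lemma set_eq_annih: "set \<beta> = set \<alpha> \<Longrightarrow> annihilating T \<beta> = annihilating T \<alpha>"
  unfolding annihilating_def in_Omega2_def subtab_def by simp

lemma irr_distinct: "irreducible_ann T \<alpha> \<Longrightarrow> distinct \<alpha>"
proof (rule ccontr)
  assume a: "irreducible_ann T \<alpha>" "\<not> distinct \<alpha>"
  then obtain xs y ys where d: "y \<in> set xs" "\<alpha> = xs @ y # ys" by (auto simp: not_distinct_conv_prefix)
  have "subseq (xs @ ys) \<alpha>" using d subseq_del by simp
  moreover have "xs @ ys \<noteq> \<alpha>" using d by simp
  moreover have "set (xs @ ys) = set \<alpha>" using d by auto
  ultimately show False using a set_eq_annih unfolding irreducible_ann_def by metis
qed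

lemma proj_val: "length v = length cs \<Longrightarrow> P f \<Longrightarrow>
  map_of (zip (filter P cs) (map fst (filter (\<lambda>p. P (snd p)) (zip v cs)))) f = map_of (zip cs v) f"
proof (induction cs arbitrary: v)
  case Nil then show ?case by simp
next
  case (Cons c cs)
  then obtain x xs where v: "v = x # xs" by (cases v) auto
  have l: "length xs = length cs" using Cons(2) v by simp
  show ?case
  proof (cases "P c")
    case True then show ?thesis using Cons.IH[OF l Cons(3)] v by simp
  next
    case False
    hence "f \<noteq> c" using Cons(3) by auto
    then show ?thesis using Cons.IH[OF l Cons(3)] v False by simp
  qed
qed


lemma dd_sub: "set (dedup_first xs) \<subseteq> set xs"
  unfolding dedup_first_def by (auto simp: set_concat)

lemma dd_ex: "x \<in> set xs \<Longrightarrow> \<exists>y\<in>set (dedup_first xs). fst y = fst x"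
proof -
  assume "x \<in> set xs"
  then obtain i where i: "i < length xs" "xs ! i = x" by (auto simp: in_set_conv_nth)
  define j where "j = (LEAST j. fst (xs ! j) = fst x)"
  have j1: "fst (xs ! j) = fst x" unfolding j_def by (rule LeastI[of _ i]) (simp add: i)
  have j2: "j \<le> i" unfolding j_def by (rule Least_le) (simp add: i)
  have j3: "\<forall>k<j. fst (xs ! k) \<noteq> fst (xs ! j)" using j1 unfolding j_def
    using not_less_Least by auto
  have "xs ! j \<in> set (dedup_first xs)" unfolding dedup_first_def using j2 i j3
    by (auto simp: set_concat intro!: bexI[of _ j])
  thus ?thesis using j1 by blast
qed

lemma I_cols: "\<not> At T \<subseteq> D \<Longrightarrow> cols (I_op D T) = filter (\<lambda>f. f \<notin> D) (cols T)"
  unfolding I_op_def cols_def by simp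

lemma I_rows_eq: "\<not> At T \<subseteq> D \<Longrightarrow> rows (I_op D T) =
   dedup_first (map (\<lambda>rd. (map fst (filter (\<lambda>p. snd p \<notin> D) (zip (fst rd) (cols T))), snd rd)) (rows T))"
  unfolding I_op_def rows_def cols_def by simp

lemma I_val: assumes "\<not> At T \<subseteq> D" "length v = length (cols T)" "f \<notin> D"
  shows "val (I_op D T) (map fst (filter (\<lambda>p. snd p \<notin> D) (zip v (cols T)))) f = val T v f"
  unfolding val_def I_cols[OF assms(1)] using proj_val[of v "cols T" "\<lambda>f. f \<notin> D" f] assms by simp

lemma I_rows1: assumes "\<not> At T \<subseteq> D" "\<forall>rd\<in>set (rows T). length (fst rd) = length (cols T)"
  "r \<in> set (rows (I_op D T))"
  shows "\<exists>rd\<in>set (rows T). snd r = snd rd \<and> (\<forall>f. f \<notin> D \<longrightarrow> val (I_op D T) (fst r) f = val T (fst rd) f)"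
proof -
  have "r \<in> set (map (\<lambda>rd. (map fst (filter (\<lambda>p. snd p \<notin> D) (zip (fst rd) (cols T))), snd rd)) (rows T))"
    using assms(3) dd_sub unfolding I_rows_eq[OF assms(1)] by blast
  then obtain rd where "rd \<in> set (rows T)" "r = (map fst (filter (\<lambda>p. snd p \<notin> D) (zip (fst rd) (cols T))), snd rd)"
    by auto
  thus ?thesis using I_val[OF assms(1)] assms(2) by auto
qed

lemma I_rows2: assumes "\<not> At T \<subseteq> D" "\<forall>rd\<in>set (rows T). length (fst rd) = length (cols T)"
  "rd \<in> set (rows T)"
  shows "\<exists>r\<in>set (rows (I_op D T)). (\<forall>f. f \<notin> D \<longrightarrow> val (I_op D T) (fst r) f = val T (fst rd) f)"
proof -
  let ?x = "(map fst (filter (\<lambda>p. snd p \<notin> D) (zip (fst rd) (cols T))), snd rd)"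
  have "?x \<in> set (map (\<lambda>rd. (map fst (filter (\<lambda>p. snd p \<notin> D) (zip (fst rd) (cols T))), snd rd)) (rows T))"
    using assms(3) by auto
  then obtain y where y: "y \<in> set (rows (I_op D T))" "fst y = fst ?x"
    using dd_ex[of ?x] unfolding I_rows_eq[OF assms(1)] by blast
  thus ?thesis using I_val[OF assms(1)] assms(2,3) by (intro bexI[OF _ y(1)]) auto
qed

lemma J_cols: "cols (J_op \<nu> T) = cols T" unfolding J_op_def cols_def by simp
lemma J_val: "val (J_op \<nu> T) = val T" unfolding val_def J_cols by simp
lemma J_rows: "set (rows (J_op \<nu> T)) = (\<lambda>rd. (fst rd, \<nu> (fst rd))) ` set (rows T)"
  unfolding J_op_def rows_def by simp

lemma path_ex: "wf_node c \<Longrightarrow> \<exists>w d. path c w d"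
proof (induction rule: wf_node.induct)
  case (1 d) then show ?case using path.intros(1) by blast
next
  case (2 es f)
  then obtain p where "p \<in> set es" by (cases es) auto
  with 2 obtain w d where "path (snd p) w d" by blast
  hence "path (Node f es) ((f, fst p) # w) d" using path.intros(2)[of "fst p" "snd p" es] \<open>p \<in> set es\<close> by simp
  thus ?case by blast
qed

lemma path_finite: "det_node c \<Longrightarrow> finite {(w, d). path c w d}"
proof (induction rule: det_node.induct)
  case (1 d)
  have "{(w, d'). path (Leaf d) w d'} = {([], d)}" by (auto elim: path.cases intro: path.intros)
  then show ?case by simp
next
  case (2 es f)
  have "{(w, d). path (Node f es) w d} \<subseteq> (\<Union>p\<in>set es. (\<lambda>(w,d). ((f, fst p) # w, d)) ` {(w, d). path (snd p) w d})"
  proof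
    fix x assume "x \<in> {(w, d). path (Node f es) w d}"
    then obtain w d where "x = (w, d)" "path (Node f es) w d" by auto
    then obtain \<delta> c w' where "w = (f, \<delta>) # w'" "(\<delta>, c) \<in> set es" "path c w' d"
      by (auto elim: path.cases)
    thus "x \<in> (\<Union>p\<in>set es. (\<lambda>(w,d). ((f, fst p) # w, d)) ` {(w, d). path (snd p) w d})"
      using \<open>x = (w, d)\<close> by (intro UN_I[of "(\<delta>, c)"]) auto
  qed
  moreover have "finite (\<Union>p\<in>set es. (\<lambda>(w,d). ((f, fst p) # w, d)) ` {(w, d). path (snd p) w d})"
    using 2 by auto
  ultimately show ?case by (rule finite_subset)
qed

definition covD :: "dtree \<Rightarrow> 'r set \<Rightarrow> ('r \<Rightarrow> nat \<Rightarrow> bool) \<Rightarrow> bool" where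
  "covD c Q vl \<longleftrightarrow> (\<forall>r\<in>Q. \<exists>w d. path c w d \<and> (\<forall>fd\<in>set w. vl r (fst fd) = snd fd))"
definition corrD :: "dtree \<Rightarrow> 'r set \<Rightarrow> ('r \<Rightarrow> nat \<Rightarrow> bool) \<Rightarrow> ('r \<Rightarrow> nat set) \<Rightarrow> bool" where
  "corrD c Q vl dec \<longleftrightarrow> (\<forall>w d. path c w d \<longrightarrow> (\<forall>r\<in>Q. (\<forall>fd\<in>set w. vl r (fst fd) = snd fd) \<longrightarrow> d \<in> dec r))"
definition disjD :: "'r set \<Rightarrow> ('r \<Rightarrow> nat set) \<Rightarrow> bool" where
  "disjD Q dec \<longleftrightarrow> (\<forall>r\<in>Q. \<forall>r'\<in>Q. r \<noteq> r' \<longrightarrow> dec r \<inter> dec r' = {})"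
definition almD :: "'r set \<Rightarrow> ('r \<Rightarrow> nat \<Rightarrow> bool) \<Rightarrow> bool" where
  "almD Q vl \<longleftrightarrow> (\<forall>f. \<exists>a. card {r\<in>Q. vl r f \<noteq> a} \<le> 1)"

lemma lower_aux:
  fixes vl :: "'r \<Rightarrow> nat \<Rightarrow> bool" and dec :: "'r \<Rightarrow> nat set"
  shows "det_node c \<Longrightarrow> \<forall>Q. wf_node c \<longrightarrow> finite Q \<longrightarrow> covD c Q vl \<longrightarrow> corrD c Q vl dec
     \<longrightarrow> disjD Q dec \<longrightarrow> almD Q vl \<longrightarrow> (\<exists>w d. path c w d \<and> card Q \<le> length w + 1)"
proof (induction rule: det_node.induct)
  case (1 d)
  show ?case
  proof (intro allI impI)
    fix Q :: "'r set"
    assume fin: "finite Q" and cov: "covD (Leaf d) Q vl" and corr: "corrD (Leaf d) Q vl dec"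
      and disj: "disjD Q dec"
    have "card Q \<le> 1"
    proof (rule ccontr)
      assume "\<not> card Q \<le> 1"
      then obtain r r' where "r \<in> Q" "r' \<in> Q" "r \<noteq> r'"
        using card_le_Suc0_iff_eq[OF fin] by auto
      moreover have "path (Leaf d) [] d" by (rule path.intros)
      ultimately have "d \<in> dec r" "d \<in> dec r'" using corr unfolding corrD_def by auto
      thus False using disj \<open>r \<in> Q\<close> \<open>r' \<in> Q\<close> \<open>r \<noteq> r'\<close> unfolding disjD_def by blast
    qed
    thus "\<exists>w da. path (Leaf d) w da \<and> card Q \<le> length w + 1"
      using path.intros(1)[of d] by (intro exI[of _ "[]"] exI[of _ d]) simp
  qed
next
  case (2 es f)
  show ?case
  proof (intro allI impI)
    fix Q :: "'r set"
    assume wf: "wf_node (Node f es)" and fin: "finite Q" and cov: "covD (Node f es) Q vl"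
      and corr: "corrD (Node f es) Q vl dec" and disj: "disjD Q dec" and alm: "almD Q vl"
    from wf have wfs: "es \<noteq> []" "\<forall>p\<in>set es. wf_node (snd p)" by (auto elim: wf_node.cases)
    obtain a where a: "card {r\<in>Q. vl r f \<noteq> a} \<le> 1" using alm unfolding almD_def by blast
    define Q' where "Q' = {r\<in>Q. vl r f = a}"
    have "Q = Q' \<union> {r\<in>Q. vl r f \<noteq> a}" unfolding Q'_def by auto
    hence cQ: "card Q \<le> card Q' + 1" using a card_Un_le[of Q' "{r\<in>Q. vl r f \<noteq> a}"] by simp
    show "\<exists>w d. path (Node f es) w d \<and> card Q \<le> length w + 1"
    proof (cases "Q' = {}")
      case True
      then show ?thesis using cQ path_ex[OF wf] by fastforce
    next
      case False
      then obtain r0 where r0: "r0 \<in> Q'" by blast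
      then obtain w d where wd: "path (Node f es) w d" "\<forall>fd\<in>set w. vl r0 (fst fd) = snd fd"
        using cov unfolding Q'_def covD_def by blast
      from wd(1) obtain \<delta> c' w' where cw: "w = (f, \<delta>) # w'" "(\<delta>, c') \<in> set es" "path c' w' d"
        by (auto elim: path.cases)
      have da: "\<delta> = a" using wd(2) cw(1) r0 unfolding Q'_def by auto
      have uniq: "\<And>c''. (a, c'') \<in> set es \<Longrightarrow> c'' = c'"
        using eq_key_imp_eq_value[OF 2(1)] cw(2) da by blast
      from bspec[OF 2(2) cw(2)] have IHc: "\<forall>Q. wf_node c' \<longrightarrow> finite Q \<longrightarrow> covD c' Q vl \<longrightarrow> corrD c' Q vl dec
         \<longrightarrow> disjD Q dec \<longrightarrow> almD Q vl \<longrightarrow> (\<exists>w d. path c' w d \<and> card Q \<le> length w + 1)" by simp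
      have h1: "wf_node c'" using wfs cw(2) by auto
      have h2: "finite Q'" using fin unfolding Q'_def by simp
      have h3: "covD c' Q' vl" unfolding covD_def
      proof
        fix r assume r: "r \<in> Q'"
        then obtain w d where wd: "path (Node f es) w d" "\<forall>fd\<in>set w. vl r (fst fd) = snd fd"
          using cov unfolding Q'_def covD_def by blast
        from wd(1) obtain \<delta>' c'' w' where cw: "w = (f, \<delta>') # w'" "(\<delta>', c'') \<in> set es" "path c'' w' d"
          by (auto elim: path.cases)
        have "\<delta>' = a" using wd(2) cw(1) r unfolding Q'_def by auto
        hence "c'' = c'" using uniq cw(2) by simp
        thus "\<exists>w d. path c' w d \<and> (\<forall>fd\<in>set w. vl r (fst fd) = snd fd)" using cw wd by auto
      qed
      have h4: "corrD c' Q' vl dec" unfolding corrD_def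
      proof (intro allI impI ballI)
        fix w d r assume "path c' w d" "r \<in> Q'" "\<forall>fd\<in>set w. vl r (fst fd) = snd fd"
        moreover have "path (Node f es) ((f, \<delta>) # w) d" using cw(2) \<open>path c' w d\<close> path.intros(2) by blast
        ultimately show "d \<in> dec r" using corr da unfolding Q'_def corrD_def by auto
      qed
      have h5: "disjD Q' dec" using disj unfolding Q'_def disjD_def by auto
      have h6: "almD Q' vl" unfolding almD_def
      proof
        fix g obtain b where "card {r\<in>Q. vl r g \<noteq> b} \<le> 1" using alm unfolding almD_def by blast
        moreover have "card {r\<in>Q'. vl r g \<noteq> b} \<le> card {r\<in>Q. vl r g \<noteq> b}"
          using fin unfolding Q'_def by (intro card_mono) auto
        ultimately have "card {r\<in>Q'. vl r g \<noteq> b} \<le> 1" by linarith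
        thus "\<exists>a. card {r\<in>Q'. vl r g \<noteq> a} \<le> 1" by blast
      qed
      from IHc h1 h2 h3 h4 h5 h6 obtain w2 d2 where "path c' w2 d2" "card Q' \<le> length w2 + 1" by blast
      hence "path (Node f es) ((f, \<delta>) # w2) d2" "card Q \<le> length ((f, \<delta>) # w2) + 1"
        using cw(2) path.intros(2) cQ by auto
      thus ?thesis by blast
    qed
  qed
qed



fun cat :: "(nat \<times> bool) list \<Rightarrow> dtree" where
  "cat [] = Leaf 0"
| "cat ((f, b) # xs) = Node f [(\<not> b, Leaf f), (b, cat xs)]"

lemma cat_wf: "wf_node (cat xs)"
  by (induction xs rule: cat.induct) (auto intro!: wf_node.intros)

lemma cat_det: "det_node (cat xs)"
  by (induction xs rule: cat.induct) (auto intro!: det_node.intros)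

lemma occ_leaf: "\<not> occurs g (Leaf d)"
  by (auto elim: occurs.cases)

lemma occ_inv: "occurs g (Node f es) \<Longrightarrow> g = f \<or> (\<exists>p\<in>set es. occurs g (snd p))"
  by (auto elim: occurs.cases)

lemma cat_occ: "occurs g (cat xs) \<Longrightarrow> g \<in> fst ` set xs"
proof (induction xs rule: cat.induct)
  case 1 then show ?case using occ_leaf by simp
next
  case (2 f b xs)
  from occ_inv[OF 2(2)[simplified]] show ?case using occ_leaf 2(1) by auto
qed

lemma cat_cover: "\<exists>w d. path (cat xs) w d \<and> (\<forall>fd\<in>set w. g (fst fd) = snd fd)"
proof (induction xs rule: cat.induct)
  case 1 then show ?case using path.intros(1) by fastforce
next
  case (2 f b xs)
  show ?case
  proof (cases "g f = b")
    case True
    then obtain w d where "path (cat xs) w d" "\<forall>fd\<in>set w. g (fst fd) = snd fd" using 2 by blast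
    moreover have "(b, cat xs) \<in> set [(\<not> b, Leaf f), (b, cat xs)]" by simp
    ultimately have "path (cat ((f, b) # xs)) ((f, b) # w) d" "\<forall>fd\<in>set ((f, b) # w). g (fst fd) = snd fd"
      using path.intros(2) True by auto
    then show ?thesis by blast
  next
    case False
    have "(\<not> b, Leaf f) \<in> set [(\<not> b, Leaf f), (b, cat xs)]" by simp
    hence "path (cat ((f, b) # xs)) [(f, \<not> b)] f" using path.intros by fastforce
    moreover have "\<forall>fd\<in>set [(f, \<not> b)]. g (fst fd) = snd fd" using False by auto
    ultimately show ?thesis by blast
  qed
qed

lemma leaf_path: "path (Leaf d) w d' \<Longrightarrow> w = [] \<and> d' = d"
  by (auto elim: path.cases)

lemma cat_path: "path (cat xs) w d \<Longrightarrow> set xs \<subseteq> set w \<or> (\<exists>x\<in>set xs. (fst x, \<not> snd x) \<in> set w \<and> d = fst x)"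
proof (induction xs arbitrary: w rule: cat.induct)
  case 1 then show ?case by simp
next
  case (2 f b xs)
  from 2(2) obtain \<delta> c w' where cw: "w = (f, \<delta>) # w'" "(\<delta>, c) \<in> set [(\<not> b, Leaf f), (b, cat xs)]" "path c w' d"
    by (auto elim: path.cases)
  show ?case
  proof (cases "\<delta> = b")
    case True
    hence "c = cat xs" using cw(2) by auto
    then show ?thesis using 2(1)[OF cw(3)[unfolded \<open>c = cat xs\<close>]] cw(1) True by auto
  next
    case False
    hence "c = Leaf f" "\<delta> = (\<not> b)" using cw(2) by auto
    then show ?thesis using cw leaf_path by fastforce
  qed
qed

lemma star_path: "path (Node f [(b, Leaf f)]) w d \<longleftrightarrow> w = [(f, b)] \<and> d = f"
proof
  assume "path (Node f [(b, Leaf f)]) w d"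
  then obtain \<delta> c w' where "w = (f, \<delta>) # w'" "(\<delta>, c) \<in> set [(b, Leaf f)]" "path c w' d"
    by (auto elim: path.cases)
  then show "w = [(f, b)] \<and> d = f" using leaf_path by auto
next
  assume "w = [(f, b)] \<and> d = f"
  then show "path (Node f [(b, Leaf f)]) w d" by (auto intro: path.intros)
qed



locale Setup =
  fixes T :: table and \<alpha> :: "(nat \<times> bool) list"
  assumes inM: "in_M2 T" and nL: "T \<noteq> Lambda" and irr: "irreducible_ann T \<alpha>" and ne: "\<alpha> \<noteq> []"
begin

definition F where "F = fst ` set \<alpha>"
definition D where "D = At T - F"
definition T1 where "T1 = I_op D T"
definition \<nu> :: "bool list \<Rightarrow> nat set" where
  "\<nu> v = (let S = {f. \<exists>\<delta>. (f, \<delta>) \<in> set \<alpha> \<and> val T1 v f \<noteq> \<delta>} in if S = {} then {0} else S)"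
definition T2 where "T2 = J_op \<nu> T1"

lemma len: "\<forall>rd\<in>set (rows T). length (fst rd) = length (cols T)"
  using inM unfolding in_M2_def by auto

lemma rowsne: "rows T \<noteq> []"
proof
  assume "rows T = []"
  hence "cols T = []" using inM unfolding in_M2_def by auto
  hence "T = Lambda" using \<open>rows T = []\<close> unfolding Lambda_def cols_def rows_def by (cases T) auto
  thus False using nL by simp
qed

lemma ann: "annihilating T \<alpha>" using irr unfolding irreducible_ann_def by simp
lemma Om: "\<forall>fd\<in>set \<alpha>. fst fd \<in> At T" using ann unfolding annihilating_def in_Omega2_def by simp
lemma sub: "subtab T \<alpha> = Lambda" using ann unfolding annihilating_def by simp
lemma cons_a: "(f, \<delta>) \<in> set \<alpha> \<Longrightarrow> (f, \<sigma>) \<in> set \<alpha> \<Longrightarrow> \<delta> = \<sigma>"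
  using ann unfolding annihilating_def by blast
lemma dist: "distinct \<alpha>" using irr_distinct[OF irr] .

lemma FAt: "F \<subseteq> At T" using Om unfolding F_def by auto
lemma nD: "\<not> At T \<subseteq> D"
proof -
  obtain x where "x \<in> set \<alpha>" using ne by (cases \<alpha>) auto
  hence "fst x \<in> F" "fst x \<in> At T" using Om unfolding F_def by auto
  thus ?thesis unfolding D_def by auto
qed
lemma FD: "f \<in> F \<Longrightarrow> f \<notin> D" unfolding D_def by auto

lemma val2: "val T2 = val T1" unfolding T2_def by (rule J_val)

lemma cols2: "set (cols T2) = F"
proof -
  have "set (cols T2) = set (filter (\<lambda>f. f \<notin> D) (cols T))"
    unfolding T2_def J_cols T1_def I_cols[OF nD] by simp
  also have "\<dots> = F" using FAt unfolding D_def At_def by auto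
  finally show ?thesis .
qed

lemma R1: "r \<in> set (rows T2) \<Longrightarrow> \<exists>rd\<in>set (rows T). snd r = \<nu> (fst r) \<and> (\<forall>f\<in>F. val T2 (fst r) f = val T (fst rd) f)"
proof -
  assume "r \<in> set (rows T2)"
  then obtain r1 where r1: "r1 \<in> set (rows T1)" "r = (fst r1, \<nu> (fst r1))"
    unfolding T2_def J_rows by auto
  obtain rd where "rd \<in> set (rows T)" "\<forall>f. f \<notin> D \<longrightarrow> val T1 (fst r1) f = val T (fst rd) f"
    using I_rows1[OF nD len r1(1)[unfolded T1_def]] unfolding T1_def by blast
  thus ?thesis using r1 val2 FD by auto
qed

lemma R2: "rd \<in> set (rows T) \<Longrightarrow> \<exists>r\<in>set (rows T2). \<forall>f\<in>F. val T2 (fst r) f = val T (fst rd) f"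
proof -
  assume "rd \<in> set (rows T)"
  then obtain r1 where r1: "r1 \<in> set (rows T1)" "\<forall>f. f \<notin> D \<longrightarrow> val T1 (fst r1) f = val T (fst rd) f"
    using I_rows2[OF nD len] unfolding T1_def by blast
  have "(fst r1, \<nu> (fst r1)) \<in> set (rows T2)" unfolding T2_def J_rows using r1(1) by auto
  thus ?thesis using r1(2) val2 FD by (intro bexI[of _ "(fst r1, \<nu> (fst r1))"]) auto
qed

lemma noneq: "rd \<in> set (rows T) \<Longrightarrow> \<exists>x\<in>set \<alpha>. val T (fst rd) (fst x) \<noteq> snd x"
  using sub unfolding subtab_Lambda2 cons_def by auto

lemma noneq2: "r \<in> set (rows T2) \<Longrightarrow> \<exists>x\<in>set \<alpha>. val T2 (fst r) (fst x) \<noteq> snd x"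
proof -
  assume "r \<in> set (rows T2)"
  then obtain rd where rd: "rd \<in> set (rows T)" "\<forall>f\<in>F. val T2 (fst r) f = val T (fst rd) f"
    using R1 by blast
  then obtain x where "x \<in> set \<alpha>" "val T (fst rd) (fst x) \<noteq> snd x" using noneq by blast
  moreover have "fst x \<in> F" using \<open>x \<in> set \<alpha>\<close> unfolding F_def by auto
  ultimately show ?thesis using rd(2) by auto
qed

lemma key: "r \<in> set (rows T2) \<Longrightarrow> x \<in> set \<alpha> \<Longrightarrow> val T2 (fst r) (fst x) \<noteq> snd x \<Longrightarrow> fst x \<in> snd r"
proof -
  assume a: "r \<in> set (rows T2)" "x \<in> set \<alpha>" "val T2 (fst r) (fst x) \<noteq> snd x"
  then obtain rd where "snd r = \<nu> (fst r)" using R1 by blast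
  moreover have "fst x \<in> {f. \<exists>\<delta>. (f, \<delta>) \<in> set \<alpha> \<and> val T1 (fst r) f \<noteq> \<delta>}"
    using a val2 by (intro CollectI exI[of _ "snd x"]) auto
  ultimately show ?thesis unfolding \<nu>_def Let_def by (auto split: if_splits)
qed

lemma rows2ne: "rows T2 \<noteq> []"
proof -
  obtain rd where "rd \<in> set (rows T)" using rowsne by (cases "rows T") auto
  thus ?thesis using R2 by fastforce
qed

lemma T2nL: "T2 \<noteq> Lambda" using rows2ne unfolding Lambda_def rows_def by auto

lemma nuPfin: "\<nu> v \<in> Pfin"
proof -
  have "{f. \<exists>\<delta>. (f, \<delta>) \<in> set \<alpha> \<and> val T1 v f \<noteq> \<delta>} \<subseteq> fst ` set \<alpha>" by force
  hence "finite {f. \<exists>\<delta>. (f, \<delta>) \<in> set \<alpha> \<and> val T1 v f \<noteq> \<delta>}" by (rule finite_subset) simp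
  thus ?thesis unfolding \<nu>_def Pfin_def Let_def by auto
qed

lemma T2_closure: "T2 \<in> closure1 T"
  unfolding closure1_def T2_def T1_def using nuPfin D_def by blast

end


context Setup begin

definition \<Gamma>s where "\<Gamma>s = map (\<lambda>x. Node (fst x) [(\<not> snd x, Leaf (fst x))]) \<alpha>"

lemma cpath_star: "cpath \<Gamma>s w d \<longleftrightarrow> (\<exists>x\<in>set \<alpha>. w = [(fst x, \<not> snd x)] \<and> d = fst x)"
  unfolding cpath_def \<Gamma>s_def using star_path by auto

lemma star_nd: "nondet_tree_for T2 \<Gamma>s"
  unfolding nondet_tree_for_def
proof (intro conjI)
  show "is_2tree \<Gamma>s" unfolding is_2tree_def \<Gamma>s_def using ne by (auto intro!: wf_node.intros)
  show "tree_At \<Gamma>s \<subseteq> At T2"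
  proof
    fix g assume "g \<in> tree_At \<Gamma>s"
    then obtain x where "x \<in> set \<alpha>" "occurs g (Node (fst x) [(\<not> snd x, Leaf (fst x))])"
      unfolding tree_At_def \<Gamma>s_def by auto
    hence "g = fst x" using occ_inv occ_leaf by fastforce
    thus "g \<in> At T2" using cols2 \<open>x \<in> set \<alpha>\<close> unfolding At_def F_def by auto
  qed
  show "\<forall>rd\<in>set (rows T2). \<exists>w d. cpath \<Gamma>s w d \<and> rd \<in> set (rows (subtab T2 w))"
  proof
    fix rd assume rd: "rd \<in> set (rows T2)"
    then obtain x where x: "x \<in> set \<alpha>" "val T2 (fst rd) (fst x) \<noteq> snd x" using noneq2 by blast
    have "cpath \<Gamma>s [(fst x, \<not> snd x)] (fst x)" using x cpath_star by auto
    moreover have "rd \<in> set (rows (subtab T2 [(fst x, \<not> snd x)]))"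
      unfolding subtab_rows cons_def using rd x by auto
    ultimately show "\<exists>w d. cpath \<Gamma>s w d \<and> rd \<in> set (rows (subtab T2 w))" by blast
  qed
  show "\<forall>w d. cpath \<Gamma>s w d \<longrightarrow> subtab T2 w = Lambda \<or> d \<in> Pi_tab (subtab T2 w)"
  proof (intro allI impI disjI2)
    fix w d assume "cpath \<Gamma>s w d"
    then obtain x where x: "x \<in> set \<alpha>" "w = [(fst x, \<not> snd x)]" "d = fst x" using cpath_star by auto
    show "d \<in> Pi_tab (subtab T2 w)"
    proof (rule Pi_subtabI)
      fix r assume "r \<in> set (rows T2)" "cons T2 r w"
      thus "d \<in> snd r" using key x unfolding cons_def by auto
    qed
  qed
qed

lemma psi_star: assumes "m_psi \<psi> T \<le> n" shows "psi_tree \<psi> \<Gamma>s \<le> n"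
proof -
  have b: "\<And>f. f \<in> At T \<Longrightarrow> \<psi> [f] \<le> n"
  proof -
    fix f assume f: "f \<in> At T"
    have fin: "finite {\<psi> [f] | f. f \<in> At T}" unfolding At_def by simp
    have "\<psi> [f] \<le> Max {\<psi> [f] | f. f \<in> At T}" using f by (intro Max_ge[OF fin]) auto
    thus "\<psi> [f] \<le> n" using assms f unfolding m_psi_def by (auto split: if_splits)
  qed
  let ?S = "{psi_word \<psi> w | w d. cpath \<Gamma>s w d}"
  have le: "\<forall>k\<in>?S. k \<le> n"
  proof
    fix k assume "k \<in> ?S"
    then obtain w d where "k = psi_word \<psi> w" "cpath \<Gamma>s w d" by auto
    then obtain x where "x \<in> set \<alpha>" "w = [(fst x, \<not> snd x)]" "k = \<psi> [fst x]"
      using cpath_star unfolding psi_word_def by auto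
    thus "k \<le> n" using b Om by auto
  qed
  hence fin: "finite ?S" by (meson finite_atMost finite_subset atMost_iff subsetI)
  obtain x where "x \<in> set \<alpha>" using ne by (cases \<alpha>) auto
  hence "cpath \<Gamma>s [(fst x, \<not> snd x)] (fst x)" using cpath_star by auto
  hence "?S \<noteq> {}" by blast
  thus ?thesis unfolding psi_tree_def using le fin by simp
qed

lemma psi_a_le: assumes "m_psi \<psi> T \<le> n" shows "psi_a \<psi> T2 \<le> n"
proof -
  have "(LEAST k. \<exists>\<Gamma>. nondet_tree_for T2 \<Gamma> \<and> psi_tree \<psi> \<Gamma> = k) \<le> psi_tree \<psi> \<Gamma>s"
    using star_nd by (intro Least_le) blast
  thus ?thesis unfolding psi_a_def using T2nL psi_star[OF assms] by simp
qed

lemma cat_dt: "det_tree_for T2 [cat \<alpha>]"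
  unfolding det_tree_for_def nondet_tree_for_def
proof (intro conjI)
  show "is_2tree [cat \<alpha>]" unfolding is_2tree_def using cat_wf by simp
  show "tree_At [cat \<alpha>] \<subseteq> At T2" unfolding tree_At_def At_def cols2 F_def using cat_occ by auto
  show "\<forall>rd\<in>set (rows T2). \<exists>w d. cpath [cat \<alpha>] w d \<and> rd \<in> set (rows (subtab T2 w))"
  proof
    fix rd assume rd: "rd \<in> set (rows T2)"
    obtain w d where "path (cat \<alpha>) w d" "\<forall>fd\<in>set w. val T2 (fst rd) (fst fd) = snd fd"
      using cat_cover by blast
    thus "\<exists>w d. cpath [cat \<alpha>] w d \<and> rd \<in> set (rows (subtab T2 w))"
      unfolding cpath_def subtab_rows cons_def using rd by auto
  qed
  show "\<forall>w d. cpath [cat \<alpha>] w d \<longrightarrow> subtab T2 w = Lambda \<or> d \<in> Pi_tab (subtab T2 w)"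
  proof (intro allI impI)
    fix w d assume "cpath [cat \<alpha>] w d"
    hence p: "path (cat \<alpha>) w d" unfolding cpath_def by simp
    from cat_path[OF p] show "subtab T2 w = Lambda \<or> d \<in> Pi_tab (subtab T2 w)"
    proof
      assume s: "set \<alpha> \<subseteq> set w"
      have "subtab T2 w = Lambda" unfolding subtab_Lambda2
      proof (intro ballI notI)
        fix r assume "r \<in> set (rows T2)" "cons T2 r w"
        then obtain x where "x \<in> set \<alpha>" "val T2 (fst r) (fst x) \<noteq> snd x" using noneq2 by blast
        thus False using s \<open>cons T2 r w\<close> unfolding cons_def by auto
      qed
      thus ?thesis ..
    next
      assume "\<exists>x\<in>set \<alpha>. (fst x, \<not> snd x) \<in> set w \<and> d = fst x"
      then obtain x where x: "x \<in> set \<alpha>" "(fst x, \<not> snd x) \<in> set w" "d = fst x" by blast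
      have "d \<in> Pi_tab (subtab T2 w)"
      proof (rule Pi_subtabI)
        fix r assume "r \<in> set (rows T2)" "cons T2 r w"
        thus "d \<in> snd r" using key x unfolding cons_def by fastforce
      qed
      thus ?thesis ..
    qed
  qed
  show "length [cat \<alpha>] = 1" by simp
  show "\<forall>c\<in>set [cat \<alpha>]. det_node c" using cat_det by simp
qed

end


context Setup begin

lemma rsel_ex: assumes x: "x \<in> set \<alpha>"
  shows "\<exists>r\<in>set (rows T2). val T2 (fst r) (fst x) \<noteq> snd x \<and> (\<forall>y\<in>set \<alpha>. y \<noteq> x \<longrightarrow> val T2 (fst r) (fst y) = snd y)"
proof -
  let ?\<beta> = "remove1 x \<alpha>"
  have "subseq ?\<beta> \<alpha>" by (rule subseq_remove1)
  moreover have "?\<beta> \<noteq> \<alpha>" using x by (metis length_remove1 diff_less length_pos_if_in_set less_numeral_extra(1) less_irrefl)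
  ultimately have na: "\<not> annihilating T ?\<beta>" using irr unfolding irreducible_ann_def by blast
  have sb: "set ?\<beta> = set \<alpha> - {x}" using dist by simp
  have "in_Omega2 T ?\<beta>" using Om sb unfolding in_Omega2_def by auto
  moreover have "\<forall>f \<delta> \<sigma>. (f, \<delta>) \<in> set ?\<beta> \<and> (f, \<sigma>) \<in> set ?\<beta> \<longrightarrow> \<delta> = \<sigma>" using sb cons_a by auto
  ultimately have "subtab T ?\<beta> \<noteq> Lambda" using na unfolding annihilating_def by blast
  then obtain rd where rd: "rd \<in> set (rows T)" "cons T rd ?\<beta>" unfolding subtab_Lambda2 by blast
  obtain z where z: "z \<in> set \<alpha>" "val T (fst rd) (fst z) \<noteq> snd z" using noneq[OF rd(1)] by blast
  have zx: "z = x" using z rd(2) sb unfolding cons_def by auto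
  obtain r where r: "r \<in> set (rows T2)" "\<forall>f\<in>F. val T2 (fst r) f = val T (fst rd) f" using R2[OF rd(1)] by blast
  have "val T2 (fst r) (fst x) \<noteq> snd x" using r(2) z zx unfolding F_def by auto
  moreover have "\<forall>y\<in>set \<alpha>. y \<noteq> x \<longrightarrow> val T2 (fst r) (fst y) = snd y"
    using r(2) rd(2) sb unfolding cons_def F_def by auto
  ultimately show ?thesis using r(1) by blast
qed

definition rsel where "rsel x = (SOME r. r \<in> set (rows T2) \<and> val T2 (fst r) (fst x) \<noteq> snd x
   \<and> (\<forall>y\<in>set \<alpha>. y \<noteq> x \<longrightarrow> val T2 (fst r) (fst y) = snd y))"

lemma rsel: assumes "x \<in> set \<alpha>"
  shows "rsel x \<in> set (rows T2)" "val T2 (fst (rsel x)) (fst x) \<noteq> snd x"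
    "\<And>y. y \<in> set \<alpha> \<Longrightarrow> y \<noteq> x \<Longrightarrow> val T2 (fst (rsel x)) (fst y) = snd y"
proof -
  have "rsel x \<in> set (rows T2) \<and> val T2 (fst (rsel x)) (fst x) \<noteq> snd x
   \<and> (\<forall>y\<in>set \<alpha>. y \<noteq> x \<longrightarrow> val T2 (fst (rsel x)) (fst y) = snd y)"
    unfolding rsel_def using someI_ex[OF rsel_ex[OF assms, unfolded Bex_def]] by blast
  thus "rsel x \<in> set (rows T2)" "val T2 (fst (rsel x)) (fst x) \<noteq> snd x"
    "\<And>y. y \<in> set \<alpha> \<Longrightarrow> y \<noteq> x \<Longrightarrow> val T2 (fst (rsel x)) (fst y) = snd y" by auto
qed

lemma rsel_dec: assumes "x \<in> set \<alpha>" shows "snd (rsel x) = {fst x}"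
proof -
  obtain rd where "snd (rsel x) = \<nu> (fst (rsel x))" using R1[OF rsel(1)[OF assms]] by blast
  moreover have eqS: "{f. \<exists>\<delta>. (f, \<delta>) \<in> set \<alpha> \<and> val T1 (fst (rsel x)) f \<noteq> \<delta>} = {fst x}"
  proof
    show "{fst x} \<subseteq> {f. \<exists>\<delta>. (f, \<delta>) \<in> set \<alpha> \<and> val T1 (fst (rsel x)) f \<noteq> \<delta>}"
      using rsel(2)[OF assms] assms val2 by (auto intro!: exI[of _ "snd x"])
    show "{f. \<exists>\<delta>. (f, \<delta>) \<in> set \<alpha> \<and> val T1 (fst (rsel x)) f \<noteq> \<delta>} \<subseteq> {fst x}"
    proof
      fix f assume "f \<in> {f. \<exists>\<delta>. (f, \<delta>) \<in> set \<alpha> \<and> val T1 (fst (rsel x)) f \<noteq> \<delta>}"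
      then obtain \<delta> where "(f, \<delta>) \<in> set \<alpha>" "val T1 (fst (rsel x)) f \<noteq> \<delta>" by blast
      hence "(f, \<delta>) = x" using rsel(3)[OF assms, of "(f, \<delta>)"] val2 by fastforce
      thus "f \<in> {fst x}" by auto
    qed
  qed
  ultimately show ?thesis unfolding \<nu>_def Let_def eqS by simp
qed

lemma psi_d_ge: assumes bd: "bounded_cm \<psi>" shows "length \<alpha> \<le> psi_d \<psi> T2 + 1"
proof -
  have ex: "\<exists>k \<Gamma>. det_tree_for T2 \<Gamma> \<and> psi_tree \<psi> \<Gamma> = k" using cat_dt by blast
  obtain \<Gamma>0 where G0: "det_tree_for T2 \<Gamma>0" "psi_tree \<psi> \<Gamma>0 = psi_d \<psi> T2"
    using LeastI_ex[OF ex] T2nL unfolding psi_d_def by auto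
  then obtain c where c: "\<Gamma>0 = [c]" unfolding det_tree_for_def by (cases \<Gamma>0) auto
  have nd: "nondet_tree_for T2 [c]" using G0 c unfolding det_tree_for_def by simp
  have dn: "det_node c" using G0 c unfolding det_tree_for_def by simp
  have wf: "wf_node c" using nd unfolding nondet_tree_for_def is_2tree_def by simp
  let ?Q = "rsel ` set \<alpha>"
  let ?vl = "\<lambda>r. val T2 (fst r)"
  have inj: "inj_on rsel (set \<alpha>)"
  proof
    fix x y assume xy: "x \<in> set \<alpha>" "y \<in> set \<alpha>" "rsel x = rsel y"
    show "x = y"
    proof (rule ccontr)
      assume "x \<noteq> y"
      hence "val T2 (fst (rsel x)) (fst y) = snd y" using rsel(3)[OF xy(1) xy(2)] by auto
      thus False using rsel(2)[OF xy(2)] xy(3) by simp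
    qed
  qed
  have cardQ: "card ?Q = length \<alpha>" using card_image[OF inj] distinct_card[OF dist] by simp
  have cov: "covD c ?Q ?vl" unfolding covD_def
  proof
    fix r assume "r \<in> ?Q"
    hence "r \<in> set (rows T2)" using rsel(1) by auto
    then obtain w d where "cpath [c] w d" "r \<in> set (rows (subtab T2 w))" using nd unfolding nondet_tree_for_def by blast
    thus "\<exists>w d. path c w d \<and> (\<forall>fd\<in>set w. ?vl r (fst fd) = snd fd)"
      unfolding cpath_def subtab_rows cons_def by auto
  qed
  have corr: "corrD c ?Q ?vl snd" unfolding corrD_def
  proof (intro allI impI ballI)
    fix w d r assume a: "path c w d" "r \<in> ?Q" "\<forall>fd\<in>set w. ?vl r (fst fd) = snd fd"
    hence r: "r \<in> set (rows T2)" "cons T2 r w" using rsel(1) unfolding cons_def by auto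
    hence "subtab T2 w \<noteq> Lambda" unfolding subtab_Lambda2 by blast
    moreover have "cpath [c] w d" using a(1) unfolding cpath_def by simp
    ultimately have "d \<in> Pi_tab (subtab T2 w)" using nd unfolding nondet_tree_for_def by blast
    thus "d \<in> snd r" using Pi_subtab r by blast
  qed
  have disj: "disjD ?Q snd" unfolding disjD_def
  proof (intro ballI impI)
    fix r r' assume "r \<in> ?Q" "r' \<in> ?Q" "r \<noteq> r'"
    then obtain x y where xy: "x \<in> set \<alpha>" "y \<in> set \<alpha>" "r = rsel x" "r' = rsel y" "x \<noteq> y" by auto
    have "fst x \<noteq> fst y"
    proof
      assume "fst x = fst y"
      have "(fst x, snd x) \<in> set \<alpha>" using xy by simp
      moreover have "(fst x, snd y) \<in> set \<alpha>" using xy \<open>fst x = fst y\<close> by (metis prod.collapse)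
      ultimately have "snd x = snd y" by (rule cons_a)
      thus False using \<open>fst x = fst y\<close> xy(5) by (simp add: prod_eq_iff)
    qed
    thus "snd r \<inter> snd r' = {}" using rsel_dec xy by simp
  qed
  have alm: "almD ?Q ?vl" unfolding almD_def
  proof
    fix f show "\<exists>a. card {r\<in>?Q. ?vl r f \<noteq> a} \<le> 1"
    proof (cases "\<exists>\<delta>. (f, \<delta>) \<in> set \<alpha>")
      case True
      then obtain \<delta> where fd: "(f, \<delta>) \<in> set \<alpha>" by blast
      have "{r\<in>?Q. ?vl r f \<noteq> \<delta>} \<subseteq> {rsel (f, \<delta>)}"
      proof
        fix r assume "r \<in> {r\<in>?Q. ?vl r f \<noteq> \<delta>}"
        then obtain y where y: "y \<in> set \<alpha>" "r = rsel y" "?vl r f \<noteq> \<delta>" by auto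
        have "y = (f, \<delta>)" using rsel(3)[OF y(1) fd] y by auto
        thus "r \<in> {rsel (f, \<delta>)}" using y by simp
      qed
      hence "card {r\<in>?Q. ?vl r f \<noteq> \<delta>} \<le> card {rsel (f, \<delta>)}" by (intro card_mono) auto
      thus ?thesis by auto
    next
      case False
      hence "f \<notin> set (cols T2)" using cols2 unfolding F_def by force
      hence N: "\<forall>v::bool list. map_of (zip (cols T2) v) f = None"
        by (auto simp: map_of_eq_None_iff dest: set_zip_leftD)
      have "{r\<in>?Q. ?vl r f \<noteq> the None} = {}" unfolding val_def using N by simp
      hence "card {r\<in>?Q. ?vl r f \<noteq> the None} \<le> 1" by (simp only: card.empty)
      thus ?thesis by blast
    qed
  qed
  obtain w d where wd: "path c w d" "card ?Q \<le> length w + 1"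
    using lower_aux[OF dn, of ?vl snd] wf cov corr disj alm by blast
  have "finite {(w, d). path c w d}" by (rule path_finite[OF dn])
  hence fin: "finite {psi_word \<psi> w | w d. cpath \<Gamma>0 w d}"
    unfolding c cpath_def
    by (rule finite_subset[rotated, OF finite_imageI[of _ "\<lambda>(w, d). psi_word \<psi> w"]]) auto
  have "psi_word \<psi> w \<le> psi_tree \<psi> \<Gamma>0"
    unfolding psi_tree_def using wd(1) c by (intro Max_ge[OF fin]) (auto simp: cpath_def)
  moreover have "length w \<le> psi_word \<psi> w" using bd unfolding bounded_cm_def psi_word_def
    by (metis length_map)
  ultimately show ?thesis using wd(2) cardQ G0(2) by linarith
qed

end


lemma Lambda_in: assumes "closed_class A" shows "Lambda \<in> A"
proof -
  obtain T where T: "T \<in> A" using assms unfolding closed_class_def by blast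
  have "J_op (\<lambda>_. {0}) (I_op (At T) T) \<in> closure1 T"
    unfolding closure1_def Pfin_def by blast
  moreover have "J_op (\<lambda>_. {0}) (I_op (At T) T) = Lambda"
    unfolding I_op_def J_op_def Lambda_def cols_def rows_def by simp
  ultimately have "Lambda \<in> closure A" using T unfolding closure_def by auto
  thus ?thesis using assms unfolding closed_class_def by simp
qed

lemma G_bound:
  assumes cc: "closed_class A" and bd: "bounded_cm \<psi>"
    and finH: "finite {psi_d \<psi> T | T. T \<in> A \<and> psi_a \<psi> T \<le> n}"
    and TA: "T \<in> A" and mT: "m_psi \<psi> T \<le> n"
  shows "G_tab T \<le> Max {psi_d \<psi> T | T. T \<in> A \<and> psi_a \<psi> T \<le> n} + 1"
proof (cases "T = Lambda \<or> \<not> (\<exists>\<alpha>. irreducible_ann T \<alpha>)")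
  case True then show ?thesis unfolding G_tab_def by simp
next
  case False
  hence nL: "T \<noteq> Lambda" and exi: "\<exists>\<alpha>. irreducible_ann T \<alpha>" by auto
  let ?L = "{length \<alpha> | \<alpha>. irreducible_ann T \<alpha>}"
  have bnd: "\<forall>k\<in>?L. k \<le> card (At T \<times> (UNIV :: bool set))"
  proof
    fix k assume "k \<in> ?L"
    then obtain \<alpha> where a: "k = length \<alpha>" "irreducible_ann T \<alpha>" by blast
    have "set \<alpha> \<subseteq> At T \<times> UNIV" using a(2) unfolding irreducible_ann_def annihilating_def in_Omega2_def
      by auto
    moreover have "finite (At T \<times> (UNIV :: bool set))" unfolding At_def by simp
    ultimately have "card (set \<alpha>) \<le> card (At T \<times> (UNIV :: bool set))" by (rule card_mono[rotated])
    thus "k \<le> card (At T \<times> (UNIV :: bool set))" using distinct_card[OF irr_distinct[OF a(2)]] a(1) by simp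
  qed
  hence finL: "finite ?L" by (meson finite_atMost finite_subset atMost_iff subsetI)
  have "?L \<noteq> {}" using exi by blast
  hence "Max ?L \<in> ?L" using finL by (rule Max_in[rotated])
  then obtain \<alpha> where a0: "irreducible_ann T \<alpha>" "Max ?L = length \<alpha>" by auto
  have "G_tab T = Max ?L" unfolding G_tab_def using nL exi by simp
  hence a: "irreducible_ann T \<alpha>" "G_tab T = length \<alpha>" using a0 by auto
  show ?thesis
  proof (cases "\<alpha> = []")
    case True then show ?thesis using a by simp
  next
    case False
    have inM: "in_M2 T" using cc TA unfolding closed_class_def by auto
    interpret S: Setup T \<alpha> using inM nL a(1) False by unfold_locales
    have "S.T2 \<in> A" using S.T2_closure TA cc unfolding closed_class_def closure_def by blast
    moreover have "psi_a \<psi> S.T2 \<le> n" by (rule S.psi_a_le[OF mT])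
    ultimately have "psi_d \<psi> S.T2 \<le> Max {psi_d \<psi> T | T. T \<in> A \<and> psi_a \<psi> T \<le> n}"
      by (intro Max_ge[OF finH]) blast
    thus ?thesis using S.psi_d_ge[OF bd] a(2) by linarith
  qed
qed

theorem lemma15:
  fixes A :: "table set" and \<psi> :: "nat list \<Rightarrow> nat"
  assumes "closed_class A" and "nontrivial A" and "bounded_cm \<psi>"
    and "\<forall>n. H_class \<psi> A n \<noteq> None"
  shows "\<forall>n. G_class \<psi> A n \<noteq> None
           \<and> int (the (H_class \<psi> A n)) \<ge> int (the (G_class \<psi> A n)) - 1"
proof
  fix n
  let ?SH = "{psi_d \<psi> T | T. T \<in> A \<and> psi_a \<psi> T \<le> n}"
  let ?SG = "{G_tab T | T. T \<in> A \<and> m_psi \<psi> T \<le> n}"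
  have finH: "finite ?SH" using assms(4) unfolding H_class_def Let_def by (auto split: if_splits)
  hence H: "the (H_class \<psi> A n) = Max ?SH" unfolding H_class_def Let_def by simp
  have bnd: "\<forall>k\<in>?SG. k \<le> Max ?SH + 1" using G_bound[OF assms(1) assms(3) finH] by blast
  hence finG: "finite ?SG" by (meson finite_atMost finite_subset atMost_iff subsetI)
  hence G: "G_class \<psi> A n = Some (Max ?SG)" unfolding G_class_def Let_def by simp
  have "m_psi \<psi> Lambda \<le> n" unfolding m_psi_def At_def Lambda_def cols_def by simp
  hence "G_tab Lambda \<in> ?SG" using Lambda_in[OF assms(1)] by blast
  hence "?SG \<noteq> {}" by blast
  hence "Max ?SG \<le> Max ?SH + 1" using finG bnd by simp
  thus "G_class \<psi> A n \<noteq> None \<and> int (the (H_class \<psi> A n)) \<ge> int (the (G_class \<psi> A n)) - 1"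
    using G H by simp
qed


end
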